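(* Let $h\ge0$ and $i\le h$ be integers. Let $\Phi(z)=\sum_{n\ge0}c_nz^n$, where $c_n$ is the number of Deutsch paths of $n$ steps from $(0,0)$ to $(n,i)$ that never go above level $h$, with no lower boundary. Let $v=v(z)$ be the power series with $v(0)=0$ satisfying $z=\frac{v}{1+v+v^2}$. Then $$\Phi(z)=\frac{(1+v)^{-i-2}\,v\,(1-v^{h+1})(1+v+v^2)}{1-v}\quad\text{for } i<0,$$ $$\Phi(z)=\frac{v^{i}(1-v^{2-i+h})(1+v+v^2)}{(1-v)(1+v)^{i+2}}\quad\text{for } 0\le i\le h.$$
   Context: A Deutsch path is a lattice path whose steps are up-steps $(1,1)$ and down-steps $(1,-k)$ for any integer $k\ge1$. The series $v$ is given explicitly by $v=\frac{1-z-\sqrt{1-2z-3z^2}}{2z}$. *)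

theory Defs
  imports "HOL-Computational_Algebra.Formal_Power_Series"
begin

text \<open>A Deutsch path of n steps is encoded by its list of step heights:
  each step is an up-step (+1) or a down-step (-k) with k \<ge> 1.
  The path starts at level 0; its heights are the prefix sums.\<close>

definition deutsch_step :: "int \<Rightarrow> bool" where
  "deutsch_step s \<longleftrightarrow> s = 1 \<or> s \<le> -1"

definition deutsch_paths_upper :: "int \<Rightarrow> int \<Rightarrow> nat \<Rightarrow> int list set" where
  "deutsch_paths_upper h i n =
     {ss. length ss = n \<and> (\<forall>s\<in>set ss. deutsch_step s) \<and> sum_list ss = i
          \<and> (\<forall>k\<le>n. sum_list (take k ss) \<le> h)}"

end

theory Submission
  imports Defs
begin


lemma dpu_0:
  assumes "h \<ge> 0"
  shows "deutsch_paths_upper h j 0 = (if j = 0 then {[]} else {})"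
  using assms by (auto simp: deutsch_paths_upper_def)

lemma take_snoc_le: "k \<le> length ss \<Longrightarrow> take k (ss @ [s]) = take k ss"
  by simp

lemma dpu_Suc:
  "deutsch_paths_upper h j (Suc n) =
    (if j \<le> h then (\<lambda>ss. ss @ [1]) ` deutsch_paths_upper h (j-1) n
       \<union> (\<Union>l\<in>{j+1..h}. (\<lambda>ss. ss @ [j-l]) ` deutsch_paths_upper h l n) else {})"
proof (rule set_eqI)
  fix xs :: "int list"
  show "xs \<in> deutsch_paths_upper h j (Suc n) \<longleftrightarrow> xs \<in> (if j \<le> h then (\<lambda>ss. ss @ [1]) ` deutsch_paths_upper h (j-1) n
       \<union> (\<Union>l\<in>{j+1..h}. (\<lambda>ss. ss @ [j-l]) ` deutsch_paths_upper h l n) else {})"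
  proof
    assume xs: "xs \<in> deutsch_paths_upper h j (Suc n)"
    then have len: "length xs = Suc n" by (simp add: deutsch_paths_upper_def)
    then obtain ss s where xe: "xs = ss @ [s]" and ls: "length ss = n"
      by (metis length_Suc_conv_rev)
    have st: "\<forall>t\<in>set ss. deutsch_step t" "deutsch_step s" and sm: "sum_list ss + s = j"
      and pre: "\<forall>k\<le>Suc n. sum_list (take k (ss @ [s])) \<le> h"
      using xs by (auto simp: deutsch_paths_upper_def xe)
    have jh: "j \<le> h" using pre[rule_format, of "Suc n"] sm ls by simp
    have pre2: "\<forall>k\<le>n. sum_list (take k ss) \<le> h"
      using pre ls by (metis le_SucI take_snoc_le)
    have ssh: "sum_list ss \<le> h" using pre2[rule_format, of n] ls by simp
    show "xs \<in> (if j \<le> h then (\<lambda>ss. ss @ [1]) ` deutsch_paths_upper h (j-1) n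
       \<union> (\<Union>l\<in>{j+1..h}. (\<lambda>ss. ss @ [j-l]) ` deutsch_paths_upper h l n) else {})"
    proof (cases "s = 1")
      case True
      then have "ss \<in> deutsch_paths_upper h (j-1) n"
        using st sm pre2 ls by (auto simp: deutsch_paths_upper_def)
      then show ?thesis using jh xe True by auto
    next
      case False
      then have s1: "s \<le> -1" using st(2) by (simp add: deutsch_step_def)
      have "ss \<in> deutsch_paths_upper h (j-s) n"
        using st sm pre2 ls by (auto simp: deutsch_paths_upper_def)
      moreover have "j - s \<in> {j+1..h}" using s1 ssh sm by auto
      moreover have "xs = ss @ [j - (j - s)]" using xe by simp
      ultimately have "xs \<in> (\<Union>l\<in>{j+1..h}. (\<lambda>ss. ss @ [j-l]) ` deutsch_paths_upper h l n)"
        by blast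
      then show ?thesis using jh by simp
    qed
  next
    assume xs: "xs \<in> (if j \<le> h then (\<lambda>ss. ss @ [1]) ` deutsch_paths_upper h (j-1) n
       \<union> (\<Union>l\<in>{j+1..h}. (\<lambda>ss. ss @ [j-l]) ` deutsch_paths_upper h l n) else {})"
    then have jh: "j \<le> h" by (auto split: if_splits)
    have "\<exists>ss l. xs = ss @ [j-l] \<and> ss \<in> deutsch_paths_upper h l n \<and> deutsch_step (j-l)"
    proof (cases "xs \<in> (\<lambda>ss. ss @ [1]) ` deutsch_paths_upper h (j-1) n")
      case True
      then obtain ss where "xs = ss @ [1]" "ss \<in> deutsch_paths_upper h (j-1) n" by blast
      then show ?thesis by (intro exI[of _ ss] exI[of _ "j-1"]) (simp add: deutsch_step_def)
    next
      case False
      then obtain l ss where "l \<in> {j+1..h}" "xs = ss @ [j-l]" "ss \<in> deutsch_paths_upper h l n"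
        using xs jh by auto
      then show ?thesis by (intro exI[of _ ss] exI[of _ l]) (simp add: deutsch_step_def)
    qed
    then obtain ss s l where xe: "xs = ss @ [s]" and ssin: "ss \<in> deutsch_paths_upper h l n"
      and sl: "s = j - l" and stp: "deutsch_step s"
      by blast
    have ls: "length ss = n" and st: "\<forall>t\<in>set ss. deutsch_step t" and sm: "sum_list ss = l"
      and pre2: "\<forall>k\<le>n. sum_list (take k ss) \<le> h"
      using ssin by (auto simp: deutsch_paths_upper_def)
    have pre: "\<forall>k\<le>Suc n. sum_list (take k (ss @ [s])) \<le> h"
    proof (intro allI impI)
      fix k assume "k \<le> Suc n"
      then consider "k \<le> n" | "k = Suc n" by linarith
      then show "sum_list (take k (ss @ [s])) \<le> h"
      proof cases
        case 1 then show ?thesis using pre2 ls by simp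
      next
        case 2 then show ?thesis using ls sm sl jh by simp
      qed
    qed
    show "xs \<in> deutsch_paths_upper h j (Suc n)"
      using ls st sm sl stp pre xe by (auto simp: deutsch_paths_upper_def)
  qed
qed

lemma dpu_finite: "h \<ge> 0 \<Longrightarrow> finite (deutsch_paths_upper h j n)"
  by (induction n arbitrary: j) (simp_all add: dpu_0 dpu_Suc)

lemma inj_snoc: "inj_on (\<lambda>ss. ss @ [c]) A"
  by (auto simp: inj_on_def)

lemma dpu_card_Suc:
  assumes "h \<ge> 0" "j \<le> h"
  shows "card (deutsch_paths_upper h j (Suc n)) = card (deutsch_paths_upper h (j-1) n)
           + (\<Sum>l\<in>{j+1..h}. card (deutsch_paths_upper h l n))"
proof -
  let ?A = "(\<lambda>ss. ss @ [1]) ` deutsch_paths_upper h (j-1) n"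
  let ?B = "\<lambda>l. (\<lambda>ss. ss @ [j-l]) ` deutsch_paths_upper h l n"
  have fA: "finite ?A" using dpu_finite[OF assms(1)] by simp
  have fB: "\<And>l. finite (?B l)" using dpu_finite[OF assms(1)] by simp
  have cB: "card (\<Union>l\<in>{j+1..h}. ?B l) = (\<Sum>l\<in>{j+1..h}. card (?B l))"
    by (rule card_UN_disjoint) (use fB in auto)
  have disj: "?A \<inter> (\<Union>l\<in>{j+1..h}. ?B l) = {}" by auto
  have "card (deutsch_paths_upper h j (Suc n)) = card ?A + card (\<Union>l\<in>{j+1..h}. ?B l)"
    unfolding dpu_Suc using assms(2) by (simp add: card_Un_disjoint[OF fA _ disj] fB)
  also have "\<dots> = card (deutsch_paths_upper h (j-1) n) + (\<Sum>l\<in>{j+1..h}. card (deutsch_paths_upper h l n))"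
    using cB by (simp add: card_image[OF inj_snoc])
  finally show ?thesis .
qed



definition bp :: "rat fps \<Rightarrow> int \<Rightarrow> rat fps" where
  "bp b k = (if k < 0 then inverse b ^ nat (-k) else b ^ nat k)"

lemma bp_succ:
  assumes "fps_nth b 0 \<noteq> 0"
  shows "bp b (k+1) = b * bp b k"
proof -
  have bi: "b * inverse b = 1" using inverse_mult_eq_1'[OF assms] .
  consider "k \<ge> 0" | "k = -1" | "k < -1" by linarith
  then show ?thesis
  proof cases
    case 1
    then have "nat (k+1) = Suc (nat k)" by simp
    then show ?thesis using 1 by (simp add: bp_def)
  next
    case 2
    then show ?thesis using bi by (simp add: bp_def)
  next
    case 3
    then have e: "nat (-k) = Suc (nat (-(k+1)))" by simp
    have "b * bp b k = (b * inverse b) * inverse b ^ nat (-(k+1))"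
      using 3 by (simp add: bp_def e mult.assoc)
    then show ?thesis using 3 bi by (simp add: bp_def)
  qed
qed

definition Gf :: "rat fps \<Rightarrow> int \<Rightarrow> int \<Rightarrow> rat fps" where
  "Gf v h j = (if j < 0 then v * (1+v+v^2) * inverse (1-v) * (1 - v^(nat h+1)) * bp (1+v) (-j-2)
     else (1+v+v^2) * inverse (1-v) * (v^nat j - v^(nat h+2)) * bp (1+v) (-j-2))"

definition Sf :: "rat fps \<Rightarrow> int \<Rightarrow> int \<Rightarrow> rat fps" where
  "Sf v h j = (if j \<le> 0 then (1+v+v^2) * inverse (1-v) * (1 - v^(nat h+1)) * bp (1+v) (-j-1)
     else (1+v+v^2) * inverse (1-v) * (v^nat j - v^(nat h+1)) * bp (1+v) (-j-1))"

lemma Sf_nonneg: "j \<ge> 0 \<Longrightarrow> Sf v h j = (1+v+v^2) * inverse (1-v) * (v^nat j - v^(nat h+1)) * bp (1+v) (-j-1)"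
  by (cases "j = 0") (auto simp: Sf_def)

lemma b0: "fps_nth (v::rat fps) 0 = 0 \<Longrightarrow> fps_nth (1+v) 0 \<noteq> 0" by simp

lemma bpe: assumes "fps_nth (v::rat fps) 0 = 0" "k' = k+1" shows "bp (1+v) k' = (1+v) * bp (1+v) k"
  using bp_succ[OF b0[OF assms(1)]] assms(2) by simp

lemma tele:
  assumes v0: "fps_nth v 0 = 0"
  shows "Gf v h j + Sf v h (j+1) = Sf v h j"
proof -
  have X: "bp (1+v) (-j-1) = (1+v) * bp (1+v) (-j-2)" by (rule bpe[OF v0]) simp
  show ?thesis
  proof (cases "j < 0")
    case True
    have S1: "Sf v h j = (1+v+v^2) * inverse (1-v) * (1 - v^(nat h+1)) * bp (1+v) (-j-1)"
      using True by (simp add: Sf_def)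
    have S2: "Sf v h (j+1) = (1+v+v^2) * inverse (1-v) * (1 - v^(nat h+1)) * bp (1+v) (-j-2)"
    proof -
      have e: "- (j + 1) - 1 = - j - 2" by simp
      show ?thesis unfolding Sf_def e using True by simp
    qed
    have G1: "Gf v h j = v * (1+v+v^2) * inverse (1-v) * (1 - v^(nat h+1)) * bp (1+v) (-j-2)"
      using True by (simp add: Gf_def)
    show ?thesis unfolding S1 S2 G1 X by (simp add: algebra_simps)
  next
    case False
    have n1: "nat (j+1) = Suc (nat j)" using False by simp
    have S1: "Sf v h j = (1+v+v^2) * inverse (1-v) * (v^nat j - v^(nat h+1)) * bp (1+v) (-j-1)"
      using False by (simp add: Sf_nonneg)
    have S2: "Sf v h (j+1) = (1+v+v^2) * inverse (1-v) * (v * v^nat j - v^(nat h+1)) * bp (1+v) (-j-2)"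
    proof -
      have e: "- (j + 1) - 1 = - j - 2" by simp
      have "j + 1 \<ge> 0" using False by simp
      from Sf_nonneg[OF this, of v h] show ?thesis unfolding e n1 by simp
    qed
    have G1: "Gf v h j = (1+v+v^2) * inverse (1-v) * (v^nat j - v * v^(nat h+1)) * bp (1+v) (-j-2)"
      using False by (simp add: Gf_def)
    show ?thesis unfolding S1 S2 G1 X by (simp add: algebra_simps)
  qed
qed

lemma alg0:
  fixes v X ai u V :: "'a::comm_ring_1"
  assumes "X*(1+v+v^2) = v" "ai*(1-v) = 1" "u*(1+v) = 1"
  shows "(1+v+v^2)*ai*(1 - v*V)*u^2 = 1 + X*(v*(1+v+v^2)*ai*(1-V)*u + (1+v+v^2)*ai*(v-V)*u^2)"
proof -
  have "1 + X*(v*(1+v+v^2)*ai*(1-V)*u + (1+v+v^2)*ai*(v-V)*u^2)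
      = 1 + (X*(1+v+v^2))*(ai*u*(v*(1-V) + (v-V)*u))" by (simp add: algebra_simps power2_eq_square)
  also have "\<dots> = 1 + v*(ai*u*(v*(1-V)*(u*(1+v)) + (v-V)*u))" using assms(1,3) by simp
  also have "\<dots> = (ai*(1-v))*(u*(1+v))^2 + v*(ai*u*(v*(1-V)*(u*(1+v)) + (v-V)*u))" using assms(2,3) by simp
  also have "\<dots> = (1+v+v^2)*ai*(1 - v*V)*u^2" by (simp add: algebra_simps power2_eq_square)
  finally show ?thesis by simp
qed

lemma algneg:
  fixes v X ai B V :: "'a::comm_ring_1"
  assumes "X*(1+v+v^2) = v"
  shows "v*(1+v+v^2)*ai*(1-V)*B = X*(v*(1+v+v^2)*ai*(1-V)*((1+v)*B) + (1+v+v^2)*ai*(1-V)*B)"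
proof -
  have "X*(v*(1+v+v^2)*ai*(1-V)*((1+v)*B) + (1+v+v^2)*ai*(1-V)*B)
     = (X*(1+v+v^2))*((1+v+v^2)*ai*(1-V)*B)" by (simp add: algebra_simps power2_eq_square)
  also have "\<dots> = v*(1+v+v^2)*ai*(1-V)*B" using assms by (simp add: mult.assoc)
  finally show ?thesis by simp
qed

lemma algpos:
  fixes v X ai B V P :: "'a::comm_ring_1"
  assumes "X*(1+v+v^2) = v"
  shows "(1+v+v^2)*ai*(v*P - v*V)*B = X*((1+v+v^2)*ai*(P - v*V)*((1+v)*B) + (1+v+v^2)*ai*(v*v*P - V)*B)"
proof -
  have "X*((1+v+v^2)*ai*(P - v*V)*((1+v)*B) + (1+v+v^2)*ai*(v*v*P - V)*B)
     = (X*(1+v+v^2))*((1+v+v^2)*ai*(P-V)*B)" by (simp add: algebra_simps power2_eq_square)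
  also have "\<dots> = v*((1+v+v^2)*ai*(P-V)*B)" using assms by simp
  also have "\<dots> = (1+v+v^2)*ai*(v*P - v*V)*B" by (simp add: algebra_simps power2_eq_square)
  finally show ?thesis by simp
qed

lemma recG:
  assumes v0: "fps_nth v 0 = 0" and Xq: "fps_X * (1+v+v^2) = v"
  shows "Gf v h j = (if j = 0 then 1 else 0) + fps_X * (Gf v h (j-1) + Sf v h (j+1))"
proof -
  let ?q = "1+v+v^2" and ?ai = "inverse (1-v)" and ?V = "v^(nat h+1)"
  have X: "bp (1+v) (-j-1) = (1+v) * bp (1+v) (-j-2)" by (rule bpe[OF v0]) simp
  have e1: "- (j - 1) - 2 = - j - 1" by simp
  consider "j < 0" | "j = 0" | "j > 0" by linarith
  then show ?thesis
  proof cases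
    case 1
    have G1: "Gf v h j = v * ?q * ?ai * (1 - ?V) * bp (1+v) (-j-2)"
      using 1 by (simp add: Gf_def)
    have G0: "Gf v h (j-1) = v * ?q * ?ai * (1 - ?V) * ((1+v) * bp (1+v) (-j-2))"
      using 1 unfolding Gf_def e1 X by simp
    have S2: "Sf v h (j+1) = ?q * ?ai * (1 - ?V) * bp (1+v) (-j-2)"
    proof -
      have e: "- (j + 1) - 1 = - j - 2" by simp
      show ?thesis unfolding Sf_def e using 1 by simp
    qed
    have "j \<noteq> 0" using 1 by simp
    then show ?thesis unfolding G1 G0 S2 by (simp only: if_False add_0_left) (rule algneg[OF Xq])
  next
    case 2
    have ai: "?ai * (1 - v) = 1" by (rule inverse_mult_eq_1) (simp add: v0)
    have u: "inverse (1+v) * (1 + v) = 1" by (rule inverse_mult_eq_1) (simp add: v0)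
    have G1: "Gf v h j = ?q * ?ai * (1 - v * ?V) * inverse (1+v) ^ 2"
      using 2 by (simp add: Gf_def bp_def)
    have G0: "Gf v h (j-1) = v * ?q * ?ai * (1 - ?V) * inverse (1+v)"
      using 2 by (simp add: Gf_def bp_def)
    have S2: "Sf v h (j+1) = ?q * ?ai * (v - ?V) * inverse (1+v) ^ 2"
      using 2 by (simp add: Sf_def bp_def)
    have I: "(if j = 0 then (1::rat fps) else 0) = 1" using 2 by simp
    show ?thesis unfolding G1 G0 S2 I by (rule alg0[OF Xq ai u])
  next
    case 3
    have n1: "nat j = Suc (nat (j-1))" using 3 by simp
    have n2: "nat (j+1) = Suc (Suc (nat (j-1)))" using 3 by simp
    have G1: "Gf v h j = ?q * ?ai * (v * v^nat (j-1) - v * ?V) * bp (1+v) (-j-2)"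
      using 3 unfolding Gf_def n1 by simp
    have G0: "Gf v h (j-1) = ?q * ?ai * (v^nat (j-1) - v * ?V) * ((1+v) * bp (1+v) (-j-2))"
      using 3 unfolding Gf_def e1 X by simp
    have S2: "Sf v h (j+1) = ?q * ?ai * (v * v * v^nat (j-1) - ?V) * bp (1+v) (-j-2)"
    proof -
      have e: "- (j + 1) - 1 = - j - 2" by simp
      have "j + 1 \<ge> 0" using 3 by simp
      from Sf_nonneg[OF this, of v h] show ?thesis unfolding e n2 by simp
    qed
    have "j \<noteq> 0" using 3 by simp
    then show ?thesis unfolding G1 G0 S2 by (simp only: if_False add_0_left) (rule algpos[OF Xq])
  qed
qed



lemma sumS:
  assumes v0: "fps_nth v 0 = 0" and h0: "h \<ge> 0"
  shows "m \<le> h+1 \<Longrightarrow> (\<Sum>l\<in>{m..h}. Gf v h l) = Sf v h m"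
proof (induction "nat (h+1-m)" arbitrary: m)
  case 0
  then have m: "m = h+1" by simp
  have n1: "nat (h+1) = nat h + 1" using h0 by simp
  have "Sf v h (h+1) = 0" using Sf_nonneg[of "h+1" v h] h0 unfolding n1 by simp
  then show ?case using m by simp
next
  case (Suc k)
  then have mh: "m \<le> h" by linarith
  have IH: "(\<Sum>l\<in>{m+1..h}. Gf v h l) = Sf v h (m+1)"
    using Suc.hyps(1)[of "m+1"] Suc.hyps(2) mh by simp
  have s: "{m..h} = insert m {m+1..h}" using mh by auto
  have "(\<Sum>l\<in>{m..h}. Gf v h l) = Gf v h m + (\<Sum>l\<in>{m+1..h}. Gf v h l)"
    unfolding s by (subst sum.insert) auto
  then show ?case using IH tele[OF v0, of h m] by simp
qed

lemma coeffs:
  assumes v0: "fps_nth v 0 = 0" and Xq: "fps_X * (1+v+v^2) = v" and h0: "h \<ge> 0"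
  shows "j \<le> h \<Longrightarrow> of_nat (card (deutsch_paths_upper h j n)) = fps_nth (Gf v h j) n"
proof (induction n arbitrary: j)
  case 0
  have "fps_nth (Gf v h j) 0 = (if j = 0 then 1 else 0)"
    by (subst recG[OF v0 Xq]) simp
  then show ?case using h0 by (simp add: dpu_0)
next
  case (Suc n)
  have "fps_nth (Gf v h j) (Suc n) = fps_nth (Gf v h (j-1)) n + fps_nth (Sf v h (j+1)) n"
    by (subst recG[OF v0 Xq]) simp
  also have "fps_nth (Sf v h (j+1)) n = (\<Sum>l\<in>{j+1..h}. fps_nth (Gf v h l) n)"
    using sumS[OF v0 h0, of "j+1"] Suc.prems fps_sum_nth[of "Gf v h" "{j+1..h}" n] by simp
  also have "\<dots> = (\<Sum>l\<in>{j+1..h}. of_nat (card (deutsch_paths_upper h l n)))"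
    using Suc.IH by (intro sum.cong) auto
  also have "fps_nth (Gf v h (j-1)) n = of_nat (card (deutsch_paths_upper h (j-1) n))"
    using Suc.IH[of "j-1"] Suc.prems by simp
  finally show ?case using dpu_card_Suc[OF h0 Suc.prems, of n] by simp
qed



theorem theorem7:
  fixes h i :: int and v :: "rat fps"
  assumes "h \<ge> 0" and "i \<le> h"
    and "fps_nth v 0 = 0"
    and "fps_X = v / (1 + v + v^2)"
  defines "\<Phi> \<equiv> Abs_fps (\<lambda>n. of_nat (card (deutsch_paths_upper h i n))) :: rat fps"
  shows "(i < 0 \<longrightarrow>
           \<Phi> = (1 + v) powi (- i - 2) * v * (1 - v ^ nat (h + 1)) * (1 + v + v^2) / (1 - v))
       \<and> (0 \<le> i \<longrightarrow>
           \<Phi> = v ^ nat i * (1 - v ^ nat (2 - i + h)) * (1 + v + v^2)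
                 / ((1 - v) * (1 + v) ^ nat (i + 2)))"
proof -
  note h0 = assms(1) and ih = assms(2) and v0 = assms(3)
  have q0: "fps_nth (1 + v + v^2) 0 \<noteq> 0" using v0 by (simp add: power2_eq_square)
  have Xq: "fps_X * (1+v+v^2) = v"
    unfolding assms(4) fps_divide_unit[OF q0] using inverse_mult_eq_1[OF q0]
    by (simp add: mult.assoc)
  have PhiG: "\<Phi> = Gf v h i"
    unfolding \<Phi>_def by (rule fps_ext) (simp add: coeffs[OF v0 Xq h0 ih])
  have a0: "fps_nth (1 - v) 0 \<noteq> 0" using v0 by simp
  have n1: "nat (h+1) = nat h + 1" using h0 by simp
  have neg: "Gf v h i = (1 + v) powi (- i - 2) * v * (1 - v ^ nat (h + 1)) * (1 + v + v^2) / (1 - v)"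
    if "i < 0"
  proof -
    have "(1 + v) powi (- i - 2) = bp (1+v) (-i-2)"
      by (simp add: power_int_def bp_def)
    then show ?thesis using that unfolding fps_divide_unit[OF a0] n1
      by (simp add: Gf_def mult_ac)
  qed
  have pos: "Gf v h i = v ^ nat i * (1 - v ^ nat (2 - i + h)) * (1 + v + v^2)
                 / ((1 - v) * (1 + v) ^ nat (i + 2))" if "0 \<le> i"
  proof -
    have d0: "fps_nth ((1 - v) * (1 + v) ^ nat (i + 2)) 0 \<noteq> 0" using v0 by simp
    have inv: "inverse ((1 - v) * (1 + v) ^ nat (i + 2)) = inverse (1-v) * bp (1+v) (-i-2)"
    proof -
      have e: "nat (- (- i - 2)) = nat (i + 2)" by simp
      have "bp (1+v) (-i-2) = inverse (1+v) ^ nat (i+2)" unfolding bp_def e using that by simp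
      then show ?thesis by (simp add: fps_inverse_mult fps_inverse_power)
    qed
    have pw: "v ^ nat i * (1 - v ^ nat (2 - i + h)) = v ^ nat i - v ^ (nat h + 2)"
    proof -
      have "nat i + nat (2 - i + h) = nat h + 2" using that ih h0 by simp
      then have "v ^ nat i * v ^ nat (2 - i + h) = v ^ (nat h + 2)" by (metis power_add)
      then show ?thesis by (simp add: algebra_simps)
    qed
    show ?thesis using that unfolding fps_divide_unit[OF d0] inv pw
      by (simp add: Gf_def mult_ac)
  qed
  show ?thesis using PhiG neg pos by simp
qed

end
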